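(* Let $M$ be a matroid of rank $r$ on a finite linearly ordered set $E$. Then $M=M(E,\mathcal V_0,\mathcal V_1,\dots,\mathcal V_{r-1})$.
   Context: Graded lexicographic order on $2^E$: $X\prec Y$ if $|X|<|Y|$, or $|X|=|Y|$ and $\min(X\triangle Y)\in X$; $\min\mathcal X$ is the $\prec$-smallest member. $X$ is $k$-closed in $M$ if $\mathrm{cl}_M(Y)\subseteq X$ for all $Y\subseteq X$ with $|Y|\le k$; $\mathrm{cl}_k(X)$ is the intersection of all $k$-closed supersets of $X$ (so $\mathrm{cl}_{-1}(X)=X$). For a flat $F$ of rank $k$, $U^*_F=\min\{U:\mathrm{cl}_{k-1}(U)=F\}$; $\mathcal U^*_k=\{U^*_F: F\text{ a flat of rank }k,\ |U^*_F|>k\}$. $V\subseteq U$ is consecutive in $U$ if there are no $e,g\in V$, $f\in U\setminus V$ with $e<f<g$. For $U\in\mathcal U^*_k$, $\mathcal V(U)$ is the set of consecutive $(k+1)$-subsets of $U$, and $\mathcal V_k=\bigcup_{U\in\mathcal U^*_k}\mathcal V(U)$. Erections: for a matroid $N$ of rank $\rho$ with independent sets $\mathcal I$, $T(N)=(E,\{I\in\mathcal I:|I|\le\rho-1\})$, and $N'$ is an erection of $N$ if $T(N')=N$ or $N'=N$. Knuth's procedure on input $N$ (rank $\rho$) and $\mathcal U\subseteq 2^E$: initialise $\mathcal H\leftarrow\mathcal U\cup\{F\cup\{e\}: F\text{ a hyperplane of }N,\ e\notin F\}$; while there are distinct $H,H'\in\mathcal H$ with $r_N(H\cap H')=\rho$,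 replace them by $H\cup H'$. It is known (Knuth) that the output does not depend on the choices and is the set of rank-$\rho$ flats of an erection of $N$, denoted $N\uparrow\mathcal U$ (equal to $N$ if the output is $\{E\}$). With $M_0$ the rank-$0$ matroid on $E$, $M(E,\mathcal U_0,\dots,\mathcal U_k)=(\cdots((M_0\uparrow\mathcal U_0)\uparrow\mathcal U_1)\cdots)\uparrow\mathcal U_k$. *)

theory Defs
  imports Main
begin

definition matroid :: "'a set \<Rightarrow> 'a set set \<Rightarrow> bool" where
  "matroid E I \<longleftrightarrow> finite E \<and> (\<forall>X\<in>I. X \<subseteq> E) \<and> {} \<in> I \<and>
     (\<forall>X Y. X \<in> I \<and> Y \<subseteq> X \<longrightarrow> Y \<in> I) \<and>
     (\<forall>X Y. X \<in> I \<and> Y \<in> I \<and> card X < card Y \<longrightarrow> (\<exists>e\<in>Y - X. insert e X \<in> I))"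

definition rk :: "'a set set \<Rightarrow> 'a set \<Rightarrow> nat" where
  "rk I X = Max (card ` {Y. Y \<subseteq> X \<and> Y \<in> I})"

definition cl :: "'a set \<Rightarrow> 'a set set \<Rightarrow> 'a set \<Rightarrow> 'a set" where
  "cl E I X = {e \<in> E. rk I (insert e X) = rk I X}"

definition flat :: "'a set \<Rightarrow> 'a set set \<Rightarrow> 'a set \<Rightarrow> bool" where
  "flat E I F \<longleftrightarrow> F \<subseteq> E \<and> cl E I F = F"

definition k_closed :: "'a set \<Rightarrow> 'a set set \<Rightarrow> int \<Rightarrow> 'a set \<Rightarrow> bool" where
  "k_closed E I k X \<longleftrightarrow> X \<subseteq> E \<and> (\<forall>Y. Y \<subseteq> X \<and> int (card Y) \<le> k \<longrightarrow> cl E I Y \<subseteq> X)"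

definition clk :: "'a set \<Rightarrow> 'a set set \<Rightarrow> int \<Rightarrow> 'a set \<Rightarrow> 'a set" where
  "clk E I k X = \<Inter> {Z. X \<subseteq> Z \<and> k_closed E I k Z}"

definition glex_less :: "'a::linorder set \<Rightarrow> 'a set \<Rightarrow> bool" where
  "glex_less X Y \<longleftrightarrow> card X < card Y \<or>
     (card X = card Y \<and> X \<noteq> Y \<and> Min ((X - Y) \<union> (Y - X)) \<in> X)"

definition glex_min :: "'a::linorder set set \<Rightarrow> 'a set" where
  "glex_min \<X> = (THE X. X \<in> \<X> \<and> (\<forall>Y\<in>\<X>. Y \<noteq> X \<longrightarrow> glex_less X Y))"

definition Ustar :: "'a::linorder set \<Rightarrow> 'a set set \<Rightarrow> 'a set \<Rightarrow> 'a set" where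
  "Ustar E I F = glex_min {U. U \<subseteq> E \<and> clk E I (int (rk I F) - 1) U = F}"

definition Ustar_k :: "'a::linorder set \<Rightarrow> 'a set set \<Rightarrow> nat \<Rightarrow> 'a set set" where
  "Ustar_k E I k = {Ustar E I F | F. flat E I F \<and> rk I F = k \<and> card (Ustar E I F) > k}"

definition consecutive :: "'a::linorder set \<Rightarrow> 'a set \<Rightarrow> bool" where
  "consecutive V U \<longleftrightarrow> V \<subseteq> U \<and>
     \<not> (\<exists>e\<in>V. \<exists>g\<in>V. \<exists>f\<in>U - V. e < f \<and> f < g)"

definition Vsets :: "nat \<Rightarrow> 'a::linorder set \<Rightarrow> 'a set set" where
  "Vsets k U = {V. consecutive V U \<and> card V = k + 1}"

definition V_k :: "'a::linorder set \<Rightarrow> 'a set set \<Rightarrow> nat \<Rightarrow> 'a set set" where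
  "V_k E I k = (\<Union>U\<in>Ustar_k E I k. Vsets k U)"

definition knuth_step :: "'a set \<Rightarrow> 'a set set \<Rightarrow> 'a set set \<Rightarrow> 'a set set \<Rightarrow> bool" where
  "knuth_step E I \<H> \<H>' \<longleftrightarrow> (\<exists>A B. A \<in> \<H> \<and> B \<in> \<H> \<and> A \<noteq> B \<and>
      rk I (A \<inter> B) = rk I E \<and> \<H>' = insert (A \<union> B) (\<H> - {A, B}))"

definition knuth_init :: "'a set \<Rightarrow> 'a set set \<Rightarrow> 'a set set \<Rightarrow> 'a set set" where
  "knuth_init E I \<U> = \<U> \<union>
     {insert e F | F e. flat E I F \<and> rk I F + 1 = rk I E \<and> e \<in> E - F}"

definition knuth_out :: "'a set \<Rightarrow> 'a set set \<Rightarrow> 'a set set \<Rightarrow> 'a set set" where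
  "knuth_out E I \<U> = (SOME \<H>. (knuth_step E I)\<^sup>*\<^sup>* (knuth_init E I \<U>) \<H> \<and>
                                 \<not> (\<exists>\<H>'. knuth_step E I \<H> \<H>'))"

text \<open>N \<up> U: independent sets of the erection whose rank-rho flats are the output of the
  procedure (rank rho + 1), which is N itself when the output is {E}.\<close>

definition erect :: "'a set \<Rightarrow> 'a set set \<Rightarrow> 'a set set \<Rightarrow> 'a set set" where
  "erect E I \<U> = I \<union> {J. J \<subseteq> E \<and> card J = rk I E + 1 \<and>
                         \<not> (\<exists>H\<in>knuth_out E I \<U>. J \<subseteq> H)}"

definition M_seq :: "'a set \<Rightarrow> 'a set set list \<Rightarrow> 'a set set" where
  "M_seq E Us = foldl (erect E) {{}} Us"

end

theory Submission
  imports Defs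
begin


locale mat =
  fixes E :: "'a::linorder set" and I :: "'a set set"
  assumes M: "matroid E I"
begin

lemma finE: "finite E" using M unfolding matroid_def by blast
lemma indep_sub: "X \<in> I \<Longrightarrow> X \<subseteq> E" using M unfolding matroid_def by blast
lemma empty_indep: "{} \<in> I" using M unfolding matroid_def by blast
lemma indep_subset: "X \<in> I \<Longrightarrow> Y \<subseteq> X \<Longrightarrow> Y \<in> I" using M unfolding matroid_def by blast
lemma augment: "X \<in> I \<Longrightarrow> Y \<in> I \<Longrightarrow> card X < card Y \<Longrightarrow> \<exists>e\<in>Y - X. insert e X \<in> I"
  using M unfolding matroid_def by blast
lemma indep_finite: "X \<in> I \<Longrightarrow> finite X" using indep_sub finE finite_subset by blast

lemma rk_set_finite: "finite (card ` {Y. Y \<subseteq> X \<and> Y \<in> I})"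
proof -
  have "{Y. Y \<subseteq> X \<and> Y \<in> I} \<subseteq> Pow E" using indep_sub by blast
  hence "finite {Y. Y \<subseteq> X \<and> Y \<in> I}" using finE by (meson finite_Pow_iff finite_subset)
  thus ?thesis by simp
qed

lemma rk_set_ne: "card ` {Y. Y \<subseteq> X \<and> Y \<in> I} \<noteq> {}" using empty_indep by blast

lemma rk_ge: "Y \<subseteq> X \<Longrightarrow> Y \<in> I \<Longrightarrow> card Y \<le> rk I X"
  unfolding rk_def using rk_set_finite by (intro Max_ge) auto

lemma rk_obtain: "\<exists>B. B \<subseteq> X \<and> B \<in> I \<and> card B = rk I X"
proof -
  have "rk I X \<in> card ` {Y. Y \<subseteq> X \<and> Y \<in> I}" unfolding rk_def
    using rk_set_finite rk_set_ne by (rule Max_in)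
  thus ?thesis by auto
qed

lemma rk_mono: "X \<subseteq> Y \<Longrightarrow> rk I X \<le> rk I Y"
proof -
  assume XY: "X \<subseteq> Y"
  obtain B where "B \<subseteq> X" "B \<in> I" "card B = rk I X" using rk_obtain by blast
  thus ?thesis using rk_ge[of B Y] XY by simp
qed

lemma rk_le_card: "finite X \<Longrightarrow> rk I X \<le> card X"
proof -
  assume f: "finite X"
  obtain B where "B \<subseteq> X" "B \<in> I" "card B = rk I X" using rk_obtain by blast
  thus ?thesis using card_mono[OF f] by metis
qed

lemma rk_indep: "X \<in> I \<Longrightarrow> rk I X = card X"
  using rk_ge[of X X] rk_le_card indep_finite by force

lemma rk_le_E: "rk I X \<le> rk I E"
proof -
  obtain B where "B \<subseteq> X" "B \<in> I" "card B = rk I X" using rk_obtain by blast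
  thus ?thesis using rk_ge[of B E] indep_sub by simp
qed

lemma indep_card_le: "X \<in> I \<Longrightarrow> card X \<le> rk I E"
  using rk_ge indep_sub by blast

lemma extend_basis: "B \<subseteq> X \<Longrightarrow> B \<in> I \<Longrightarrow> \<exists>B'. B \<subseteq> B' \<and> B' \<subseteq> X \<and> B' \<in> I \<and> card B' = rk I X"
proof (induction "rk I X - card B" arbitrary: B rule: less_induct)
  case less
  show ?case
  proof (cases "card B < rk I X")
    case False
    with rk_ge[OF less.prems] have "card B = rk I X" by simp
    thus ?thesis using less.prems by blast
  next
    case True
    obtain C where C: "C \<subseteq> X" "C \<in> I" "card C = rk I X" using rk_obtain by blast
    then obtain e where e: "e \<in> C - B" "insert e B \<in> I" using augment[OF less.prems(2) C(2)] True by auto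
    have fB: "finite B" using less.prems(2) indep_finite by blast
    have c: "card (insert e B) = Suc (card B)" using e fB by simp
    have "rk I X - card (insert e B) < rk I X - card B" using c True by simp
    moreover have "insert e B \<subseteq> X" using e C less.prems by blast
    ultimately obtain B' where "insert e B \<subseteq> B'" "B' \<subseteq> X" "B' \<in> I" "card B' = rk I X"
      using less.hyps[of "insert e B"] e by blast
    thus ?thesis by blast
  qed
qed

lemma rk_insert: "rk I (insert e X) \<le> Suc (rk I X)"
proof -
  obtain B where B: "B \<subseteq> insert e X" "B \<in> I" "card B = rk I (insert e X)" using rk_obtain by blast
  have "B - {e} \<subseteq> X" "B - {e} \<in> I" using B indep_subset by blast+
  hence "card (B - {e}) \<le> rk I X" by (rule rk_ge)
  moreover have "card B \<le> Suc (card (B - {e}))"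
    using indep_finite[OF B(2)] by (simp add: card_Diff_singleton_if) (metis Suc_pred card_gt_0_iff empty_iff le_refl)
  ultimately show ?thesis using B by simp
qed

lemma submod: "rk I (X \<union> Y) + rk I (X \<inter> Y) \<le> rk I X + rk I Y"
proof -
  obtain Bc where Bc: "Bc \<subseteq> X \<inter> Y" "Bc \<in> I" "card Bc = rk I (X \<inter> Y)" using rk_obtain by blast
  obtain Z where Z: "Bc \<subseteq> Z" "Z \<subseteq> X \<union> Y" "Z \<in> I" "card Z = rk I (X \<union> Y)"
    using extend_basis[of Bc "X \<union> Y"] Bc by blast
  have fZ: "finite Z" using Z indep_finite by blast
  have a: "card (Z \<inter> X) \<le> rk I X" using Z indep_subset by (intro rk_ge) auto
  have b: "card (Z \<inter> Y) \<le> rk I Y" using Z indep_subset by (intro rk_ge) auto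
  have c: "card Bc \<le> card (Z \<inter> X \<inter> Y)" using Bc Z fZ by (intro card_mono) auto
  have d: "card (Z \<inter> X) + card (Z \<inter> Y) = card ((Z \<inter> X) \<union> (Z \<inter> Y)) + card ((Z \<inter> X) \<inter> (Z \<inter> Y))"
    using fZ by (intro card_Un_Int) auto
  have e: "(Z \<inter> X) \<union> (Z \<inter> Y) = Z" using Z by blast
  have f: "(Z \<inter> X) \<inter> (Z \<inter> Y) = Z \<inter> X \<inter> Y" by blast
  show ?thesis using a b c d e f Z Bc by simp
qed

lemma elem_mono: "Y \<subseteq> W \<Longrightarrow> rk I (insert x Y) = rk I Y \<Longrightarrow> rk I (insert x W) = rk I W"
proof -
  assume YW: "Y \<subseteq> W" and h: "rk I (insert x Y) = rk I Y"
  have "rk I (insert x Y \<union> W) + rk I (insert x Y \<inter> W) \<le> rk I (insert x Y) + rk I W" by (rule submod)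
  moreover have "insert x Y \<union> W = insert x W" using YW by blast
  moreover have "rk I Y \<le> rk I (insert x Y \<inter> W)" using YW by (intro rk_mono) blast
  ultimately have "rk I (insert x W) \<le> rk I W" using h by simp
  moreover have "rk I W \<le> rk I (insert x W)" by (intro rk_mono) blast
  ultimately show ?thesis by simp
qed

lemma union_rank: "finite D \<Longrightarrow> (\<forall>d\<in>D. rk I (insert d W) = rk I W) \<Longrightarrow> rk I (W \<union> D) = rk I W"
proof (induction D rule: finite_induct)
  case empty then show ?case by simp
next
  case (insert x D)
  have "rk I (insert x (W \<union> D)) = rk I (W \<union> D)"
    using elem_mono[of W "W \<union> D" x] insert by blast
  thus ?case using insert by simp
qed

lemma cl_sub: "X \<subseteq> E \<Longrightarrow> X \<subseteq> cl E I X"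
  unfolding cl_def by (auto simp: insert_absorb)

lemma cl_E: "cl E I X \<subseteq> E" unfolding cl_def by blast

lemma rk_cl: "X \<subseteq> E \<Longrightarrow> rk I (cl E I X) = rk I X"
proof -
  assume X: "X \<subseteq> E"
  have "finite (cl E I X)" using cl_E finE finite_subset by blast
  hence "rk I (X \<union> cl E I X) = rk I X" by (intro union_rank) (auto simp: cl_def)
  moreover have "X \<union> cl E I X = cl E I X" using cl_sub[OF X] by blast
  ultimately show ?thesis by simp
qed

lemma cl_mono: "Y \<subseteq> W \<Longrightarrow> cl E I Y \<subseteq> cl E I W"
  unfolding cl_def using elem_mono by blast

lemma cl_idem: "X \<subseteq> E \<Longrightarrow> cl E I (cl E I X) = cl E I X"
proof
  assume X: "X \<subseteq> E"
  show "cl E I X \<subseteq> cl E I (cl E I X)" using cl_sub cl_E by blast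
  show "cl E I (cl E I X) \<subseteq> cl E I X"
  proof
    fix e assume e: "e \<in> cl E I (cl E I X)"
    hence eE: "e \<in> E" and h: "rk I (insert e (cl E I X)) = rk I X" using rk_cl[OF X] unfolding cl_def by auto
    have "rk I (insert e X) \<le> rk I (insert e (cl E I X))" using cl_sub[OF X] by (intro rk_mono) blast
    moreover have "rk I X \<le> rk I (insert e X)" by (intro rk_mono) blast
    ultimately show "e \<in> cl E I X" using h eE unfolding cl_def by simp
  qed
qed

lemma flat_cl: "X \<subseteq> E \<Longrightarrow> flat E I (cl E I X)"
  unfolding flat_def using cl_idem cl_E by blast

lemma flat_closed: "flat E I F \<Longrightarrow> k_closed E I j F"
  unfolding k_closed_def flat_def using cl_mono by blast

lemma not_cl: "x \<in> E \<Longrightarrow> x \<notin> cl E I X \<Longrightarrow> rk I (insert x X) = Suc (rk I X)"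
proof -
  assume "x \<in> E" "x \<notin> cl E I X"
  hence "rk I (insert x X) \<noteq> rk I X" unfolding cl_def by blast
  moreover have "rk I X \<le> rk I (insert x X)" by (rule rk_mono) blast
  ultimately show ?thesis using rk_insert[of x X] by simp
qed

lemma through: assumes "Y \<subseteq> A" "A \<subseteq> E" "rk I Y \<le> m" "m \<le> rk I A"
  shows "\<exists>B. B \<subseteq> A \<and> B \<in> I \<and> card B = m \<and> Y \<subseteq> cl E I B"
proof -
  obtain By where By: "By \<subseteq> Y" "By \<in> I" "card By = rk I Y" using rk_obtain by blast
  obtain Ba where Ba: "By \<subseteq> Ba" "Ba \<subseteq> A" "Ba \<in> I" "card Ba = rk I A"
    using extend_basis[of By A] By assms by blast
  have fBa: "finite Ba" using Ba indep_finite by blast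
  have "m - card By \<le> card (Ba - By)" using Ba By assms fBa by (simp add: card_Diff_subset finite_subset)
  then obtain T where T: "T \<subseteq> Ba - By" "card T = m - card By" by (meson obtain_subset_with_card_n)
  define B where "B = By \<union> T"
  have fT: "finite T" using T fBa finite_subset by blast
  have fBy: "finite By" using By indep_finite by blast
  have cB: "card B = m" unfolding B_def using T fT fBy assms By
    by (subst card_Un_disjoint) auto
  have BI: "B \<in> I" using indep_subset[OF Ba(3)] T Ba unfolding B_def by blast
  have "Y \<subseteq> cl E I By"
  proof
    fix y assume y: "y \<in> Y"
    have "rk I (insert y By) \<le> rk I Y" using y By by (intro rk_mono) blast
    moreover have "rk I By \<le> rk I (insert y By)" by (intro rk_mono) blast
    moreover have "rk I By = card By" using rk_indep By by blast
    ultimately show "y \<in> cl E I By" using y assms By unfolding cl_def by auto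
  qed
  also have "\<dots> \<subseteq> cl E I B" unfolding B_def by (intro cl_mono) blast
  finally have "Y \<subseteq> cl E I B" .
  moreover have "B \<subseteq> A" using Ba T unfolding B_def by blast
  ultimately show ?thesis using cB BI by blast
qed

end


definition lexl :: "'a::linorder set \<Rightarrow> 'a set \<Rightarrow> bool" where
  "lexl X Y \<longleftrightarrow> (\<exists>a. a \<in> X \<and> a \<notin> Y \<and> (\<forall>b<a. b \<in> X \<longleftrightarrow> b \<in> Y))"

lemma min_symdiff: assumes "finite X" "finite Y" "X \<noteq> Y"
  shows "Min ((X - Y) \<union> (Y - X)) \<in> X \<longleftrightarrow> lexl X Y"
proof -
  let ?D = "(X - Y) \<union> (Y - X)"
  have fD: "finite ?D" using assms by simp
  have ne: "?D \<noteq> {}" using assms by blast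
  have m: "Min ?D \<in> ?D" using fD ne by (rule Min_in)
  have lt: "b \<in> X \<longleftrightarrow> b \<in> Y" if "b < Min ?D" for b
  proof (rule ccontr)
    assume "\<not> (b \<in> X \<longleftrightarrow> b \<in> Y)"
    hence "b \<in> ?D" by blast
    hence "Min ?D \<le> b" using Min_le[OF fD] by blast
    thus False using that by simp
  qed
  show ?thesis
  proof
    assume "Min ?D \<in> X" thus "lexl X Y" unfolding lexl_def using m lt by blast
  next
    assume "lexl X Y" then obtain a where a: "a \<in> X" "a \<notin> Y" "\<forall>b<a. b \<in> X \<longleftrightarrow> b \<in> Y"
      unfolding lexl_def by blast
    have "a \<in> ?D" using a by blast
    hence "Min ?D \<le> a" using Min_le[OF fD] by blast
    moreover have "\<not> Min ?D < a" using a(3) m by blast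
    ultimately have "Min ?D = a" by simp
    thus "Min ?D \<in> X" using a by simp
  qed
qed

lemma lexl_trans: assumes "lexl X Y" "lexl Y Z" shows "lexl X Z"
proof -
  obtain a where a: "a \<in> X" "a \<notin> Y" "\<And>c. c<a \<Longrightarrow> c \<in> X \<longleftrightarrow> c \<in> Y" using assms(1) unfolding lexl_def by blast
  obtain b where b: "b \<in> Y" "b \<notin> Z" "\<And>c. c<b \<Longrightarrow> c \<in> Y \<longleftrightarrow> c \<in> Z" using assms(2) unfolding lexl_def by blast
  consider "a < b" | "b < a" | "a = b" using less_linear[of a b] by blast
  thus ?thesis
  proof cases
    case 1
    have "a \<notin> Z" using a(2) b(3)[OF 1] by blast
    moreover have "c \<in> X \<longleftrightarrow> c \<in> Z" if "c < a" for c
      using a(3)[OF that] b(3)[of c] that 1 by simp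
    ultimately show ?thesis unfolding lexl_def using a(1) by blast
  next
    case 2
    have "b \<in> X" using b(1) a(3)[OF 2] by blast
    moreover have "c \<in> X \<longleftrightarrow> c \<in> Z" if "c < b" for c
      using b(3)[OF that] a(3)[of c] that 2 by simp
    ultimately show ?thesis unfolding lexl_def using b(2) by blast
  next
    case 3 thus ?thesis using a(2) b(1) by simp
  qed
qed

lemma lexl_asym: assumes "lexl X Y" "lexl Y X" shows False
proof -
  obtain a where a: "a \<in> X" "a \<notin> Y" "\<And>c. c<a \<Longrightarrow> c \<in> X \<longleftrightarrow> c \<in> Y" using assms(1) unfolding lexl_def by blast
  obtain b where b: "b \<in> Y" "b \<notin> X" "\<And>c. c<b \<Longrightarrow> c \<in> Y \<longleftrightarrow> c \<in> X" using assms(2) unfolding lexl_def by blast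
  consider "a < b" | "b < a" | "a = b" using less_linear[of a b] by blast
  thus False
  proof cases
    case 1 thus False using a(1,2) b(3)[OF 1] by simp
  next
    case 2 thus False using b(1,2) a(3)[OF 2] by simp
  next
    case 3 thus False using a(2) b(1) by simp
  qed
qed

lemma glex_iff: "finite X \<Longrightarrow> finite Y \<Longrightarrow>
  glex_less X Y \<longleftrightarrow> card X < card Y \<or> (card X = card Y \<and> X \<noteq> Y \<and> lexl X Y)"
proof -
  assume f: "finite X" "finite Y"
  have "X \<noteq> Y \<Longrightarrow> (Min ((X - Y) \<union> (Y - X)) \<in> X \<longleftrightarrow> lexl X Y)" using min_symdiff[OF f] by blast
  thus ?thesis unfolding glex_less_def by auto
qed

lemma lexl_irr: "\<not> lexl X X" unfolding lexl_def by blast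

lemma glex_trans: assumes f: "finite X" "finite Y" "finite Z" and h: "glex_less X Y" "glex_less Y Z"
  shows "glex_less X Z"
proof -
  have h1: "card X < card Y \<or> (card X = card Y \<and> lexl X Y)" using h(1) glex_iff[OF f(1,2)] by blast
  have h2: "card Y < card Z \<or> (card Y = card Z \<and> lexl Y Z)" using h(2) glex_iff[OF f(2,3)] by blast
  have "card X < card Z \<or> (card X = card Z \<and> lexl X Z)"
  proof (cases "card X < card Y")
    case True thus ?thesis using h2 by auto
  next
    case False
    hence a: "card X = card Y" "lexl X Y" using h1 by auto
    show ?thesis
    proof (cases "card Y < card Z")
      case True thus ?thesis using a by simp
    next
      case False
      hence "card Y = card Z" "lexl Y Z" using h2 by auto
      thus ?thesis using a lexl_trans by auto
    qed
  qed
  moreover have "lexl X Z \<Longrightarrow> X \<noteq> Z" using lexl_irr by blast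
  ultimately show ?thesis using glex_iff[OF f(1,3)] by blast
qed

lemma glex_asym: assumes f: "finite X" "finite Y" and h: "glex_less X Y" "glex_less Y X" shows False
proof -
  have h1: "card X < card Y \<or> (card X = card Y \<and> lexl X Y)" using h(1) glex_iff[OF f(1,2)] by blast
  have h2: "card Y < card X \<or> (card Y = card X \<and> lexl Y X)" using h(2) glex_iff[OF f(2,1)] by blast
  show False using h1 h2 lexl_asym by auto
qed

lemma glex_total: assumes "finite X" "finite Y" "X \<noteq> Y" shows "glex_less X Y \<or> glex_less Y X"
proof -
  let ?D = "(X - Y) \<union> (Y - X)"
  have "Min ?D \<in> ?D" using assms by (intro Min_in) auto
  hence m: "Min ?D \<in> X \<or> Min ?D \<in> Y" by blast
  have D: "(Y - X) \<union> (X - Y) = ?D" by blast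
  consider "card X < card Y" | "card Y < card X" | "card X = card Y" by linarith
  thus ?thesis
  proof cases
    case 1 thus ?thesis unfolding glex_less_def by blast
  next
    case 2 thus ?thesis unfolding glex_less_def by blast
  next
    case 3
    show ?thesis
    proof (cases "Min ?D \<in> X")
      case True thus ?thesis unfolding glex_less_def using 3 assms(3) by blast
    next
      case False hence "Min ?D \<in> Y" using m by blast
      hence "glex_less Y X" unfolding glex_less_def D using 3 assms(3) by simp
      thus ?thesis by blast
    qed
  qed
qed

lemma glex_min_ex: "finite \<X> \<Longrightarrow> \<X> \<noteq> {} \<Longrightarrow> \<forall>X\<in>\<X>. finite X \<Longrightarrow>
  \<exists>X\<in>\<X>. \<forall>Y\<in>\<X>. Y \<noteq> X \<longrightarrow> glex_less X Y"
proof (induction \<X> rule: finite_ne_induct)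
  case (singleton x) then show ?case by simp
next
  case (insert x F)
  then obtain m where m: "m \<in> F" "\<forall>Y\<in>F. Y \<noteq> m \<longrightarrow> glex_less m Y" by auto
  have fx: "finite x" "finite m" using insert m by auto
  show ?case
  proof (cases "glex_less x m")
    case True
    have "\<forall>Y\<in>insert x F. Y \<noteq> x \<longrightarrow> glex_less x Y"
    proof (intro ballI impI)
      fix Y assume Y: "Y \<in> insert x F" "Y \<noteq> x"
      hence YF: "Y \<in> F" by simp
      show "glex_less x Y"
      proof (cases "Y = m")
        case True thus ?thesis using \<open>glex_less x m\<close> by simp
      next
        case False
        hence "glex_less m Y" using m YF by blast
        thus ?thesis using glex_trans[of x m Y] True fx insert YF by blast
      qed
    qed
    thus ?thesis by blast
  next
    case False
    have "x \<noteq> m" using insert m by blast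
    hence "glex_less m x" using glex_total[of x m] fx False by blast
    hence "\<forall>Y\<in>insert x F. Y \<noteq> m \<longrightarrow> glex_less m Y" using m by blast
    thus ?thesis using m by blast
  qed
qed

lemma glex_min_card: assumes "finite \<X>" "\<X> \<noteq> {}" "\<forall>X\<in>\<X>. finite X"
  shows "glex_min \<X> \<in> \<X> \<and> (\<forall>Y\<in>\<X>. card (glex_min \<X>) \<le> card Y)"
proof -
  let ?P = "\<lambda>X. X \<in> \<X> \<and> (\<forall>Y\<in>\<X>. Y \<noteq> X \<longrightarrow> glex_less X Y)"
  obtain X where X: "?P X" using glex_min_ex[OF assms] by blast
  have u: "X' = X" if "?P X'" for X'
  proof (rule ccontr)
    assume "X' \<noteq> X"
    hence "glex_less X' X" "glex_less X X'" using that X by auto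
    thus False using glex_asym[of X X'] that X assms(3) by blast
  qed
  have "?P (glex_min \<X>)" unfolding glex_min_def using X u by (rule theI)
  moreover have "card (glex_min \<X>) \<le> card Y" if "Y \<in> \<X>" "?P (glex_min \<X>)" for Y
    using that unfolding glex_less_def by (cases "Y = glex_min \<X>") auto
  ultimately show ?thesis by blast
qed



context mat begin

definition T :: "nat \<Rightarrow> 'a set set" where "T k = {X \<in> I. card X \<le> k}"

lemma rk_T: "rk (T k) X = min (rk I X) k"
proof -
  let ?S = "card ` {Y. Y \<subseteq> X \<and> Y \<in> T k}"
  have sub: "?S \<subseteq> {..k}" unfolding T_def by blast
  have fin: "finite ?S" using sub finite_subset by blast
  have e: "{} \<in> {Y. Y \<subseteq> X \<and> Y \<in> T k}" using empty_indep unfolding T_def by simp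
  hence ne: "?S \<noteq> {}" by blast
  have bnd: "a \<le> min (rk I X) k" if aS: "a \<in> ?S" for a
  proof -
    obtain Y where Y: "a = card Y" "Y \<subseteq> X" "Y \<in> I" "card Y \<le> k" using aS unfolding T_def by blast
    have "card Y \<le> rk I X" using rk_ge Y(2,3) by blast
    thus ?thesis using Y by simp
  qed
  have le: "Max ?S \<le> min (rk I X) k" using bnd Max_in[OF fin ne] by blast
  obtain B where B: "B \<subseteq> X" "B \<in> I" "card B = rk I X" using rk_obtain by blast
  have "min (rk I X) k \<le> card B" using B by simp
  then obtain C where C: "C \<subseteq> B" "card C = min (rk I X) k"
    using obtain_subset_with_card_n by metis
  have "C \<in> I" using C B indep_subset by blast
  hence "C \<in> T k" using C unfolding T_def by simp
  hence "card C \<in> ?S" using C B by blast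
  hence "min (rk I X) k \<le> Max ?S" using C fin Max_ge by metis
  moreover have "rk (T k) X = Max ?S" by (simp add: rk_def)
  ultimately show ?thesis using le by simp
qed

lemma flat_T: assumes "flat E I F" "Suc (rk I F) = k" shows "flat E (T k) F"
proof -
  have "cl E (T k) F = cl E I F"
  proof -
    { fix x
      have "rk I F \<le> rk I (insert x F)" by (rule rk_mono) blast
      moreover have "rk I (insert x F) \<le> Suc (rk I F)" by (rule rk_insert)
      ultimately have "(min (rk I (insert x F)) k = min (rk I F) k) \<longleftrightarrow> rk I (insert x F) = rk I F"
        using assms(2) by linarith }
    thus ?thesis unfolding cl_def rk_T by blast
  qed
  thus ?thesis using assms(1) unfolding flat_def by simp
qed

lemma rkT_E: "k \<le> rk I E \<Longrightarrow> rk (T k) E = k" by (simp add: rk_T)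

end

context mat begin

lemma kc_E: "k_closed E I j E" unfolding k_closed_def using cl_E by blast
lemma clk_sup: "U \<subseteq> clk E I j U" unfolding clk_def by blast
lemma clk_least: "U \<subseteq> Z \<Longrightarrow> k_closed E I j Z \<Longrightarrow> clk E I j U \<subseteq> Z" unfolding clk_def by blast
lemma clk_m1: "U \<subseteq> E \<Longrightarrow> clk E I (-1) U = U"
proof -
  assume "U \<subseteq> E"
  hence "k_closed E I (-1) U" unfolding k_closed_def by simp
  thus ?thesis using clk_sup[of U] clk_least[of U U] by blast
qed

lemma Ustar_props: assumes G: "flat E I G"
  shows "Ustar E I G \<subseteq> E \<and> clk E I (int (rk I G) - 1) (Ustar E I G) = G \<and>
    (\<forall>U'. U' \<subseteq> E \<and> clk E I (int (rk I G) - 1) U' = G \<longrightarrow> card (Ustar E I G) \<le> card U')"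
proof -
  let ?X = "{U. U \<subseteq> E \<and> clk E I (int (rk I G) - 1) U = G}"
  have GE: "G \<subseteq> E" using G unfolding flat_def by blast
  have "clk E I (int (rk I G) - 1) G = G" using clk_sup[of G] clk_least[OF subset_refl flat_closed[OF G]] by blast
  hence "G \<in> ?X" using GE by blast
  moreover have "?X \<subseteq> Pow E" by blast
  hence "finite ?X" using finE by (simp add: finite_subset)
  moreover have "\<forall>X\<in>?X. finite X" using finE finite_subset by blast
  ultimately have "glex_min ?X \<in> ?X \<and> (\<forall>Y\<in>?X. card (glex_min ?X) \<le> card Y)"
    by (intro glex_min_card) auto
  thus ?thesis unfolding Ustar_def using GE by auto
qed

lemma Ustar_sub: "flat E I G \<Longrightarrow> Ustar E I G \<subseteq> G"
proof -
  assume G: "flat E I G"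
  have "clk E I (int (rk I G) - 1) (Ustar E I G) = G" using Ustar_props[OF G] by blast
  moreover have "Ustar E I G \<subseteq> clk E I (int (rk I G) - 1) (Ustar E I G)" by (rule clk_sup)
  ultimately show ?thesis by simp
qed

end

context mat begin

lemma claimC: assumes G: "flat E I G" and W: "W \<subseteq> Ustar E I G" "card W \<le> rk I G"
  shows "W \<in> I"
proof (rule ccontr)
  assume nW: "W \<notin> I"
  let ?U = "Ustar E I G" and ?j = "int (rk I G) - 1"
  have P: "?U \<subseteq> E" "clk E I ?j ?U = G"
    "\<And>U'. U' \<subseteq> E \<Longrightarrow> clk E I ?j U' = G \<Longrightarrow> card ?U \<le> card U'" using Ustar_props[OF G] by blast+
  have fU: "finite ?U" using P(1) finE finite_subset by blast
  have fW: "finite W" using W(1) fU finite_subset by blast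
  obtain B where B: "B \<subseteq> W" "B \<in> I" "card B = rk I W" using rk_obtain by blast
  have "B \<noteq> W" using B(2) nW by blast
  then obtain w where w: "w \<in> W" "w \<notin> B" using B(1) by blast
  have BW: "B \<subseteq> W - {w}" using B(1) w(2) by blast
  have r1: "card B \<le> rk I (W - {w})" using rk_ge[OF BW B(2)] .
  have r2: "rk I (W - {w}) \<le> rk I W" by (rule rk_mono) blast
  have iw: "insert w (W - {w}) = W" using w(1) by blast
  have eq0: "rk I W = rk I (W - {w})" using r1 r2 B(3) by linarith
  have eq: "rk I (insert w (W - {w})) = rk I (W - {w})" using eq0 iw by simp
  have wE: "w \<in> E" using w(1) W(1) P(1) by blast
  have wcl: "w \<in> cl E I (W - {w})" unfolding cl_def using eq wE by simp
  have c1: "card (W - {w}) = card W - 1" using w(1) fW by simp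
  have c2: "card W \<ge> 1" using w(1) fW card_0_eq by fastforce
  have cW: "int (card (W - {w})) \<le> ?j" using c1 c2 W(2) by linarith
  have fam: "{Z. ?U - {w} \<subseteq> Z \<and> k_closed E I ?j Z} = {Z. ?U \<subseteq> Z \<and> k_closed E I ?j Z}"
  proof (intro set_eqI iffI)
    fix Z assume Z: "Z \<in> {Z. ?U - {w} \<subseteq> Z \<and> k_closed E I ?j Z}"
    have Z1: "?U - {w} \<subseteq> Z" and Z2: "k_closed E I ?j Z" using Z by auto
    have "W - {w} \<subseteq> Z" using Z1 W(1) by blast
    hence "cl E I (W - {w}) \<subseteq> Z" using Z2 cW unfolding k_closed_def by blast
    hence "w \<in> Z" using wcl by blast
    hence "?U \<subseteq> Z" using Z1 by blast
    thus "Z \<in> {Z. ?U \<subseteq> Z \<and> k_closed E I ?j Z}" using Z2 by simp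
  next
    fix Z assume "Z \<in> {Z. ?U \<subseteq> Z \<and> k_closed E I ?j Z}"
    thus "Z \<in> {Z. ?U - {w} \<subseteq> Z \<and> k_closed E I ?j Z}" by blast
  qed
  have "clk E I ?j (?U - {w}) = clk E I ?j ?U" unfolding clk_def fam ..
  hence "clk E I ?j (?U - {w}) = G" using P(2) by simp
  moreover have "?U - {w} \<subseteq> E" using P(1) by blast
  ultimately have "card ?U \<le> card (?U - {w})" using P(3) by blast
  moreover have "w \<in> ?U" using w(1) W(1) by blast
  hence "card (?U - {w}) < card ?U" by (rule card_Diff1_less[OF fU])
  ultimately show False by simp
qed

end

context mat begin

definition kinv :: "nat \<Rightarrow> 'a set set \<Rightarrow> bool" where
  "kinv k H \<longleftrightarrow> (\<forall>A\<in>H. A \<subseteq> E \<and> rk I A \<le> k)"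
definition stp :: "nat \<Rightarrow> 'a set set \<Rightarrow> 'a set set \<Rightarrow> bool" where
  "stp k = knuth_step E (T k)"
definition initk :: "nat \<Rightarrow> 'a set set" where
  "initk k = knuth_init E (T k) (V_k E I k)"
definition outk :: "nat \<Rightarrow> 'a set set" where
  "outk k = knuth_out E (T k) (V_k E I k)"

lemma kinv_fin: "kinv k H \<Longrightarrow> finite H"
proof -
  assume "kinv k H"
  hence "H \<subseteq> Pow E" unfolding kinv_def by blast
  thus ?thesis using finE by (simp add: finite_subset)
qed

lemma card_dec: assumes fin: "finite H" and st: "stp k H H'" shows "card H' < card H"
proof -
  obtain A B where AB: "A \<in> H" "B \<in> H" "A \<noteq> B" "H' = insert (A \<union> B) (H - {A, B})"
    using st unfolding stp_def knuth_step_def by blast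
  have sub: "{A, B} \<subseteq> H" using AB by blast
  have c2: "card {A, B} = 2" using AB(3) by simp
  have "card (H - {A, B}) = card H - 2" using card_Diff_subset[OF _ sub] c2 by simp
  moreover have "card H \<ge> 2" using card_mono[OF fin sub] c2 by simp
  moreover have "card (insert (A \<union> B) (H - {A, B})) \<le> Suc (card (H - {A, B}))"
    using fin by (simp add: card_insert_if)
  ultimately show ?thesis using AB(4) by simp
qed

lemma cover: assumes A: "A \<in> H" shows "(stp k)\<^sup>*\<^sup>* H H' \<Longrightarrow> \<exists>A'\<in>H'. A \<subseteq> A'"
proof (induction rule: rtranclp_induct)
  case base thus ?case using A by blast
next
  case (step Y Z)
  then obtain A' where A': "A' \<in> Y" "A \<subseteq> A'" by blast
  obtain A0 B0 where AB: "A0 \<in> Y" "B0 \<in> Y" "Z = insert (A0 \<union> B0) (Y - {A0, B0})"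
    using step(2) unfolding stp_def knuth_step_def by blast
  show ?case
  proof (cases "A' \<in> {A0, B0}")
    case True hence "A \<subseteq> A0 \<union> B0" using A' by blast
    thus ?thesis using AB by blast
  next
    case False thus ?thesis using A' AB by blast
  qed
qed

context
  fixes k :: nat
  assumes kr: "k < rk I E"
begin

lemma rkTE: "rk (T k) E = k" using kr by (simp add: rk_T)

lemma init_inv: "kinv k (initk k)"
  unfolding kinv_def
proof
  fix A assume A: "A \<in> initk k"
  show "A \<subseteq> E \<and> rk I A \<le> k"
  proof (cases "A \<in> V_k E I k")
    case True
    then obtain U where U: "U \<in> Ustar_k E I k" "A \<in> Vsets k U" unfolding V_k_def by blast
    then obtain G where G: "U = Ustar E I G" "flat E I G" "rk I G = k" unfolding Ustar_k_def by blast
    have "A \<subseteq> U" using U(2) unfolding Vsets_def consecutive_def by blast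
    hence AG: "A \<subseteq> G" using Ustar_sub[OF G(2)] G(1) by blast
    hence "rk I A \<le> rk I G" by (rule rk_mono)
    moreover have "G \<subseteq> E" using G(2) unfolding flat_def by blast
    ultimately show ?thesis using AG G(3) by blast
  next
    case False
    then obtain F e where Fe: "A = insert e F" "flat E (T k) F" "rk (T k) F + 1 = rk (T k) E" "e \<in> E - F"
      using A unfolding initk_def knuth_init_def by blast
    have FE: "F \<subseteq> E" using Fe(2) unfolding flat_def by blast
    have "min (rk I F) k + 1 = k" using Fe(3) rkTE by (simp add: rk_T)
    hence "rk I F + 1 = k" by (simp add: min_def split: if_splits)
    hence "rk I A \<le> k" using rk_insert[of e F] Fe(1) by simp
    thus ?thesis using FE Fe by blast
  qed
qed

lemma step_inv: assumes inv: "kinv k H" and st: "stp k H H'" shows "kinv k H'"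
proof -
  obtain A B where AB: "A \<in> H" "B \<in> H" "A \<noteq> B" "rk (T k) (A \<inter> B) = rk (T k) E"
      "H' = insert (A \<union> B) (H - {A, B})"
    using st unfolding stp_def knuth_step_def by blast
  have A: "A \<subseteq> E" "rk I A \<le> k" and B: "B \<subseteq> E" "rk I B \<le> k" using inv AB unfolding kinv_def by auto
  have "min (rk I (A \<inter> B)) k = k" using AB(4) rkTE by (simp add: rk_T)
  hence "k \<le> rk I (A \<inter> B)" by (simp add: min_def split: if_splits)
  moreover have "rk I (A \<union> B) + rk I (A \<inter> B) \<le> rk I A + rk I B" by (rule submod)
  ultimately have "rk I (A \<union> B) \<le> k" using A B by linarith
  thus ?thesis using inv A B AB(5) unfolding kinv_def by auto
qed

lemma terminates: "kinv k H \<Longrightarrow> \<exists>H'. (stp k)\<^sup>*\<^sup>* H H' \<and> \<not> (\<exists>H''. stp k H' H'')"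
proof (induction "card H" arbitrary: H rule: less_induct)
  case less
  show ?case
  proof (cases "\<exists>H''. stp k H H''")
    case False thus ?thesis by blast
  next
    case True
    then obtain H'' where st: "stp k H H''" by blast
    have "card H'' < card H" using card_dec[OF kinv_fin[OF less.prems] st] .
    moreover have "kinv k H''" using step_inv less.prems st by blast
    ultimately obtain H' where "(stp k)\<^sup>*\<^sup>* H'' H'" "\<not> (\<exists>H3. stp k H' H3)"
      using less.hyps by blast
    thus ?thesis using st by (meson converse_rtranclp_into_rtranclp)
  qed
qed

lemma out_props: "(stp k)\<^sup>*\<^sup>* (initk k) (outk k) \<and> \<not> (\<exists>H'. stp k (outk k) H')"
proof -
  have "\<exists>H'. (stp k)\<^sup>*\<^sup>* (initk k) H' \<and> \<not> (\<exists>H''. stp k H' H'')" using terminates init_inv by blast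
  hence "\<exists>H'. (knuth_step E (T k))\<^sup>*\<^sup>* (knuth_init E (T k) (V_k E I k)) H' \<and> \<not> (\<exists>H''. knuth_step E (T k) H' H'')"
    unfolding stp_def initk_def .
  hence "(knuth_step E (T k))\<^sup>*\<^sup>* (knuth_init E (T k) (V_k E I k)) (knuth_out E (T k) (V_k E I k)) \<and>
    \<not> (\<exists>H''. knuth_step E (T k) (knuth_out E (T k) (V_k E I k)) H'')"
    unfolding knuth_out_def by (rule someI_ex)
  thus ?thesis unfolding stp_def initk_def outk_def .
qed

lemma star_inv: "(stp k)\<^sup>*\<^sup>* H H' \<Longrightarrow> kinv k H \<Longrightarrow> kinv k H'"
  by (induction rule: rtranclp_induct) (auto intro: step_inv)

lemma out_inv: "kinv k (outk k)" using star_inv out_props init_inv by blast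

lemma init_cover: "X \<in> initk k \<Longrightarrow> \<exists>A\<in>outk k. X \<subseteq> A"
  using cover out_props by blast

lemma merge: assumes A: "A \<in> outk k" and B: "B \<in> outk k" and C: "C \<subseteq> A" "C \<subseteq> B" "k \<le> rk I C"
  shows "A = B"
proof (rule ccontr)
  assume ne: "A \<noteq> B"
  have "rk I C \<le> rk I (A \<inter> B)" using C by (intro rk_mono) blast
  hence "min (rk I (A \<inter> B)) k = k" using C(3) by simp
  hence "rk (T k) (A \<inter> B) = rk (T k) E" using rkTE by (simp add: rk_T)
  hence "stp k (outk k) (insert (A \<union> B) (outk k - {A, B}))"
    unfolding stp_def knuth_step_def using A B ne by blast
  thus False using out_props by blast
qed

end
end

context mat begin
context
  fixes k :: nat
  assumes kr: "k < rk I E"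
begin

lemma closedness: assumes A: "A \<in> outk k" and rA: "k \<le> rk I A"
  shows "k_closed E I (int k - 1) A"
proof -
  have AE: "A \<subseteq> E" using out_inv[OF kr] A unfolding kinv_def by auto
  show ?thesis unfolding k_closed_def
  proof (intro conjI allI impI)
    show "A \<subseteq> E" by (rule AE)
    fix Y assume Y: "Y \<subseteq> A \<and> int (card Y) \<le> int k - 1"
    have YA: "Y \<subseteq> A" using Y by blast
    have "int (card Y) \<le> int k - 1" using Y by blast
    hence cY: "card Y + 1 \<le> k" by presburger
    have "Y \<subseteq> E" using YA AE by (rule subset_trans)
    hence fY: "finite Y" using finE by (rule finite_subset)
    have rY: "rk I Y \<le> k - 1" using rk_le_card[OF fY] cY by linarith
    have km: "k - 1 \<le> rk I A" using rA by linarith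
    obtain B where B: "B \<subseteq> A" "B \<in> I" "card B = k - 1" "Y \<subseteq> cl E I B"
      using through[OF YA AE rY km] by blast
    define F where "F = cl E I B"
    have BE: "B \<subseteq> E" using B(1) AE by blast
    have rB: "rk I B = k - 1" using rk_indep[OF B(2)] B(3) by simp
    have rF: "rk I F = k - 1" unfolding F_def using rk_cl[OF BE] rB by simp
    have flF: "flat E I F" unfolding F_def by (rule flat_cl[OF BE])
    have "\<not> A \<subseteq> F"
    proof
      assume "A \<subseteq> F" hence "rk I A \<le> rk I F" by (rule rk_mono)
      thus False using rF rA cY by linarith
    qed
    then obtain e where e: "e \<in> A" "e \<notin> F" by blast
    have eE: "e \<in> E" using e(1) AE by blast
    have "Suc (rk I F) = k" using rF cY by linarith
    hence "flat E (T k) F" by (rule flat_T[OF flF])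
    moreover have "rk (T k) F + 1 = rk (T k) E" using rF kr cY by (simp add: rk_T)
    ultimately have "\<exists>F' e'. insert e F = insert e' F' \<and> flat E (T k) F' \<and> rk (T k) F' + 1 = rk (T k) E \<and> e' \<in> E - F'"
      using e(2) eE by blast
    hence "insert e F \<in> initk k" unfolding initk_def knuth_init_def by blast
    then obtain A' where A': "A' \<in> outk k" "insert e F \<subseteq> A'" using init_cover[OF kr] by blast
    have BF: "B \<subseteq> F" unfolding F_def by (rule cl_sub[OF BE])
    have "e \<notin> cl E I B" using e(2) unfolding F_def .
    hence "rk I (insert e B) = Suc (rk I B)" by (rule not_cl[OF eE])
    hence "k \<le> rk I (insert e B)" using rB cY by linarith
    moreover have c1: "insert e B \<subseteq> A" using e(1) B(1) by blast
    moreover have c2: "insert e B \<subseteq> A'" using A'(2) BF by blast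
    ultimately have AA': "A = A'" using merge[OF kr A A'(1) c1 c2] by blast
    have "cl E I Y \<subseteq> cl E I (cl E I B)" by (rule cl_mono[OF B(4)])
    also have "\<dots> = F" unfolding F_def by (rule cl_idem[OF BE])
    also have "\<dots> \<subseteq> A" using A'(2) AA' by blast
    finally show "cl E I Y \<subseteq> A" .
  qed
qed

end
end

context mat begin
context
  fixes k :: nat
  assumes kr: "k < rk I E"
begin

lemma suff: assumes G: "flat E I G" and rG: "rk I G = k" and A: "A \<in> outk k"
  and UA: "Ustar E I G \<subseteq> A" and rA: "k \<le> rk I A"
  shows "G \<subseteq> A"
proof -
  have "clk E I (int (rk I G) - 1) (Ustar E I G) = G" using Ustar_props[OF G] by blast
  hence e: "clk E I (int k - 1) (Ustar E I G) = G" using rG by simp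
  have "k_closed E I (int k - 1) A" by (rule closedness[OF kr A rA])
  hence "clk E I (int k - 1) (Ustar E I G) \<subseteq> A" by (rule clk_least[OF UA])
  thus ?thesis using e by simp
qed

lemma hyp_in_init: assumes B: "B \<in> I" "card B + 1 = k" and eE: "e \<in> E" and e: "e \<notin> cl E I B"
  shows "insert e (cl E I B) \<in> initk k"
proof -
  define F where "F = cl E I B"
  have BE: "B \<subseteq> E" using B(1) by (rule indep_sub)
  have rB: "rk I B = card B" using rk_indep[OF B(1)] .
  have rF: "rk I F = card B" unfolding F_def using rk_cl[OF BE] rB by simp
  have flF: "flat E I F" unfolding F_def by (rule flat_cl[OF BE])
  have "Suc (rk I F) = k" using rF B(2) by simp
  hence fl: "flat E (T k) F" by (rule flat_T[OF flF])
  have r: "rk (T k) F + 1 = rk (T k) E" using rF kr B(2) by (simp add: rk_T)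
  have "\<exists>F' e'. insert e F = insert e' F' \<and> flat E (T k) F' \<and> rk (T k) F' + 1 = rk (T k) E \<and> e' \<in> E - F'"
    using fl r e eE unfolding F_def by blast
  hence "insert e F \<in> initk k" unfolding initk_def knuth_init_def by blast
  thus ?thesis unfolding F_def .
qed

end
end

context mat begin
context
  fixes k :: nat
  assumes kr: "k < rk I E"
begin

lemma cover_small: assumes G: "flat E I G" and rG: "rk I G = k" and Gne: "G \<noteq> {}"
  and cU: "card (Ustar E I G) \<le> k"
  shows "\<exists>A\<in>outk k. G \<subseteq> A"
proof -
  let ?U = "Ustar E I G"
  have P: "?U \<subseteq> E" "clk E I (int (rk I G) - 1) ?U = G" using Ustar_props[OF G] by blast+
  have fU: "finite ?U" using P(1) finE by (rule finite_subset)
  have UI: "?U \<in> I" using claimC[OF G subset_refl] cU rG by simp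
  have k0: "k \<noteq> 0"
  proof
    assume k0: "k = 0"
    hence "card ?U = 0" using cU by simp
    hence "?U = {}" using fU by simp
    hence "clk E I (-1) {} = G" using P(2) rG k0 by simp
    moreover have "clk E I (-1) {} = {}" using clk_m1[of "{}"] by simp
    ultimately show False using Gne by simp
  qed
  have "G \<subseteq> cl E I ?U"
  proof -
    have "k_closed E I (int (rk I G) - 1) (cl E I ?U)" by (rule flat_closed[OF flat_cl[OF P(1)]])
    hence "clk E I (int (rk I G) - 1) ?U \<subseteq> cl E I ?U" by (rule clk_least[OF cl_sub[OF P(1)]])
    thus ?thesis using P(2) by simp
  qed
  hence "rk I G \<le> rk I (cl E I ?U)" by (rule rk_mono)
  hence "k \<le> card ?U" using rk_cl[OF P(1)] rk_indep[OF UI] rG by simp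
  hence cUk: "card ?U = k" using cU by simp
  hence "?U \<noteq> {}" using k0 by auto
  then obtain u where u: "u \<in> ?U" by blast
  define B where "B = ?U - {u}"
  have BI: "B \<in> I" unfolding B_def using indep_subset[OF UI] by blast
  have cB: "card B + 1 = k" unfolding B_def using cUk u fU k0 by simp
  have uE: "u \<in> E" using u P(1) by blast
  have iu: "insert u B = ?U" unfolding B_def using u by blast
  have "u \<notin> cl E I B"
  proof
    assume "u \<in> cl E I B"
    hence "rk I (insert u B) = rk I B" unfolding cl_def by blast
    thus False using iu rk_indep[OF UI] rk_indep[OF BI] cB cUk by simp
  qed
  hence "insert u (cl E I B) \<in> initk k" by (rule hyp_in_init[OF kr BI cB uE])
  then obtain A where A: "A \<in> outk k" "insert u (cl E I B) \<subseteq> A" using init_cover[OF kr] by blast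
  have BE: "B \<subseteq> E" using indep_sub[OF BI] .
  have "B \<subseteq> cl E I B" by (rule cl_sub[OF BE])
  hence UA: "?U \<subseteq> A" using A(2) iu by blast
  have "k \<le> rk I A" using rk_mono[OF UA] rk_indep[OF UI] cUk by simp
  thus ?thesis using suff[OF kr G rG A(1) UA] A(1) by blast
qed

end
end

context mat begin
context
  fixes k :: nat
  assumes kr: "k < rk I E"
begin

lemma cover_large: assumes G: "flat E I G" and rG: "rk I G = k"
  and cU: "k < card (Ustar E I G)"
  shows "\<exists>A\<in>outk k. G \<subseteq> A"
proof -
  let ?U = "Ustar E I G"
  have P: "?U \<subseteq> E" using Ustar_props[OF G] by blast
  have fU: "finite ?U" using P(1) finE by (rule finite_subset)
  have indep: "W \<in> I" if "W \<subseteq> ?U" "card W \<le> k" for W using claimC[OF G that(1)] that(2) rG by simp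
  have Uin: "?U \<in> Ustar_k E I k" unfolding Ustar_k_def using G rG cU by blast
  obtain xs where xs: "sorted_wrt (<) xs" "set xs = ?U" using ex1_sorted_list_for_set_if_finite[OF fU] by blast
  have dxs: "distinct xs" using xs(1) strict_sorted_iff by blast
  define m where "m = card ?U"
  have km: "k < m" using cU m_def by simp
  have len: "length xs = m" unfolding m_def using distinct_card[OF dxs] xs(2) by simp
  define u where "u = (\<lambda>i. xs ! i)"
  have umono: "u i < u j" if "i < j" "j < m" for i j
    unfolding u_def using sorted_wrt_nth_less[OF xs(1) that(1)] that(2) len by simp
  have uU: "u i \<in> ?U" if "i < m" for i unfolding u_def using that xs(2) len nth_mem by blast
  have usurj: "\<exists>j<m. u j = x" if "x \<in> ?U" for x unfolding u_def using that xs(2) len in_set_conv_nth by metis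
  have uless: "a < j" if "a < m" "j < m" "u a < u j" for a j
  proof (rule ccontr)
    assume "\<not> a < j"
    hence "j < a \<or> j = a" by auto
    thus False using umono[of j a] that by auto
  qed
  have uinj: "inj_on u {..<m}"
  proof (rule inj_onI)
    fix a b assume ab: "a \<in> {..<m}" "b \<in> {..<m}" "u a = u b"
    show "a = b"
    proof (rule ccontr)
      assume "a \<noteq> b"
      hence "a < b \<or> b < a" by auto
      thus False using umono[of a b] umono[of b a] ab by auto
    qed
  qed
  define V where "V = (\<lambda>i. u ` {i..i+k})"
  have Vsub: "V i \<subseteq> ?U" if "i + k < m" for i unfolding V_def using uU that by auto
  have cardsub: "card (u ` S) = card S" if "S \<subseteq> {..<m}" for S
    using card_image[OF inj_on_subset[OF uinj that]] .
  have cardV: "card (V i) = k + 1" if "i + k < m" for i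
  proof -
    have "{i..i+k} \<subseteq> {..<m}" using that by auto
    thus ?thesis unfolding V_def using cardsub by simp
  qed
  have consV: "consecutive (V i) ?U" if h: "i + k < m" for i
  proof -
    have "\<not> (\<exists>e\<in>V i. \<exists>g\<in>V i. \<exists>f\<in>?U - V i. e < f \<and> f < g)"
    proof
      assume "\<exists>e\<in>V i. \<exists>g\<in>V i. \<exists>f\<in>?U - V i. e < f \<and> f < g"
      then obtain a b f where ab: "a \<in> {i..i+k}" "b \<in> {i..i+k}" "f \<in> ?U" "f \<notin> V i" "u a < f" "f < u b"
        unfolding V_def by blast
      obtain j where j: "j < m" "u j = f" using usurj ab(3) by blast
      have am: "a < m" "b < m" using ab(1,2) h by auto
      have "a < j" using uless[OF am(1) j(1)] ab(5) j(2) by simp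
      moreover have "j < b" using uless[OF j(1) am(2)] ab(6) j(2) by simp
      ultimately have "j \<in> {i..i+k}" using ab(1,2) by auto
      hence "f \<in> V i" unfolding V_def using j(2) by blast
      thus False using ab(4) by blast
    qed
    thus ?thesis unfolding consecutive_def using Vsub[OF h] by blast
  qed
  have Vinit: "V i \<in> initk k" if h: "i + k < m" for i
  proof -
    have "V i \<in> Vsets k ?U" unfolding Vsets_def using consV[OF h] cardV[OF h] by blast
    hence "V i \<in> V_k E I k" unfolding V_k_def using Uin by blast
    thus ?thesis unfolding initk_def knuth_init_def by blast
  qed
  have "0 + k < m" using km by simp
  then obtain A0 where A0: "A0 \<in> outk k" "V 0 \<subseteq> A0" using init_cover[OF kr Vinit] by blast
  have allV: "i + k < m \<Longrightarrow> V i \<subseteq> A0" for i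
  proof (induction i)
    case 0 thus ?case using A0 by simp
  next
    case (Suc i)
    hence IH: "V i \<subseteq> A0" by simp
    obtain A' where A': "A' \<in> outk k" "V (Suc i) \<subseteq> A'" using init_cover[OF kr Vinit[OF Suc.prems]] by blast
    define C where "C = u ` {Suc i..i+k}"
    have C1: "C \<subseteq> V i" unfolding C_def V_def by (rule image_mono) auto
    have C2: "C \<subseteq> V (Suc i)" unfolding C_def V_def by (rule image_mono) auto
    have "{Suc i..i+k} \<subseteq> {..<m}" using Suc.prems by auto
    hence cC: "card C = k" unfolding C_def using cardsub by simp
    have "C \<subseteq> ?U" using C2 Vsub[OF Suc.prems] by blast
    hence "C \<in> I" using indep cC by simp
    hence "k \<le> rk I C" using rk_indep cC by simp
    moreover have "C \<subseteq> A0" using C1 IH by blast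
    moreover have "C \<subseteq> A'" using C2 A'(2) by blast
    ultimately have "A0 = A'" using merge[OF kr A0(1) A'(1)] by blast
    thus ?case using A'(2) by simp
  qed
  have UA: "?U \<subseteq> A0"
  proof
    fix x assume "x \<in> ?U"
    then obtain j where j: "j < m" "u j = x" using usurj by blast
    show "x \<in> A0"
    proof (cases "j + k < m")
      case True hence "u j \<in> V j" unfolding V_def by simp
      thus ?thesis using allV[OF True] j by blast
    next
      case False
      define i where "i = m - k - 1"
      have i1: "i + k < m" using km unfolding i_def by simp
      have "j \<in> {i..i+k}" using False j(1) unfolding i_def by auto
      hence "u j \<in> V i" unfolding V_def by blast
      thus ?thesis using allV[OF i1] j by blast
    qed
  qed
  obtain W where W: "W \<subseteq> ?U" "card W = k" using obtain_subset_with_card_n[of k ?U] cU by auto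
  have "W \<in> I" using indep W by simp
  hence "card W \<le> rk I A0" using rk_ge[of W A0] W(1) UA by blast
  hence "k \<le> rk I A0" using W(2) by simp
  thus ?thesis using suff[OF kr G rG A0(1) UA] A0(1) by blast
qed

end
end

context mat begin
context
  fixes k :: nat
  assumes kr: "k < rk I E"
begin

lemma mainJ: assumes JE: "J \<subseteq> E" and cJ: "card J = Suc k"
  shows "J \<in> I \<longleftrightarrow> \<not> (\<exists>A\<in>outk k. J \<subseteq> A)"
proof
  assume JI: "J \<in> I"
  show "\<not> (\<exists>A\<in>outk k. J \<subseteq> A)"
  proof
    assume "\<exists>A\<in>outk k. J \<subseteq> A"
    then obtain A where A: "A \<in> outk k" "J \<subseteq> A" by blast
    have "rk I A \<le> k" using out_inv[OF kr] A(1) unfolding kinv_def by blast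
    moreover have "rk I J \<le> rk I A" by (rule rk_mono[OF A(2)])
    ultimately show False using rk_indep[OF JI] cJ by simp
  qed
next
  assume nA: "\<not> (\<exists>A\<in>outk k. J \<subseteq> A)"
  show "J \<in> I"
  proof (rule ccontr)
    assume nJ: "J \<notin> I"
    have fJ: "finite J" using JE finE by (rule finite_subset)
    obtain B where B: "B \<subseteq> J" "B \<in> I" "card B = rk I J" using rk_obtain by blast
    have "B \<noteq> J" using B(2) nJ by blast
    hence "B \<subset> J" using B(1) by blast
    hence "card B < card J" by (rule psubset_card_mono[OF fJ])
    hence rJ: "rk I J \<le> k" using B(3) cJ by simp
    have kE: "k \<le> rk I E" using kr by simp
    obtain C where C: "C \<subseteq> E" "C \<in> I" "card C = k" "J \<subseteq> cl E I C"
      using through[OF JE subset_refl rJ kE] by blast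
    define G where "G = cl E I C"
    have flG: "flat E I G" unfolding G_def by (rule flat_cl[OF C(1)])
    have rG: "rk I G = k" unfolding G_def using rk_cl[OF C(1)] rk_indep[OF C(2)] C(3) by simp
    have "J \<noteq> {}" using cJ by auto
    hence Gne: "G \<noteq> {}" using C(4) unfolding G_def by blast
    have "\<exists>A\<in>outk k. G \<subseteq> A"
    proof (cases "k < card (Ustar E I G)")
      case True thus ?thesis by (rule cover_large[OF kr flG rG])
    next
      case False thus ?thesis using cover_small[OF kr flG rG Gne] by simp
    qed
    thus False using nA C(4) unfolding G_def by blast
  qed
qed

lemma erect_step: "erect E (T k) (V_k E I k) = T (Suc k)"
proof -
  have "erect E (T k) (V_k E I k) = T k \<union> {J. J \<subseteq> E \<and> card J = k + 1 \<and> \<not> (\<exists>H\<in>outk k. J \<subseteq> H)}"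
    unfolding erect_def outk_def using rkTE[OF kr] by simp
  also have "\<dots> = T (Suc k)"
  proof (intro set_eqI iffI)
    fix X assume "X \<in> T k \<union> {J. J \<subseteq> E \<and> card J = k + 1 \<and> \<not> (\<exists>H\<in>outk k. J \<subseteq> H)}"
    thus "X \<in> T (Suc k)"
    proof
      assume "X \<in> T k" thus ?thesis unfolding T_def by simp
    next
      assume X: "X \<in> {J. J \<subseteq> E \<and> card J = k + 1 \<and> \<not> (\<exists>H\<in>outk k. J \<subseteq> H)}"
      hence "X \<in> I" using mainJ[of X] by simp
      thus ?thesis using X unfolding T_def by simp
    qed
  next
    fix X assume X: "X \<in> T (Suc k)"
    hence XI: "X \<in> I" and cX: "card X \<le> Suc k" unfolding T_def by auto
    show "X \<in> T k \<union> {J. J \<subseteq> E \<and> card J = k + 1 \<and> \<not> (\<exists>H\<in>outk k. J \<subseteq> H)}"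
    proof (cases "card X \<le> k")
      case True thus ?thesis using XI unfolding T_def by simp
    next
      case False
      hence c: "card X = Suc k" using cX by simp
      have XE: "X \<subseteq> E" by (rule indep_sub[OF XI])
      hence "\<not> (\<exists>A\<in>outk k. X \<subseteq> A)" using mainJ[OF XE c] XI by simp
      thus ?thesis using XE c by simp
    qed
  qed
  finally show ?thesis .
qed

end

lemma T0: "T 0 = {{}}"
proof -
  have "X = {}" if "X \<in> I" "card X \<le> 0" for X using indep_finite[OF that(1)] that(2) by simp
  thus ?thesis unfolding T_def using empty_indep by auto
qed

lemma Tr: "T (rk I E) = I"
  unfolding T_def using indep_card_le by blast

lemma mseq: "k \<le> rk I E \<Longrightarrow> M_seq E (map (V_k E I) [0..<k]) = T k"
proof (induction k)
  case 0 thus ?case unfolding M_seq_def using T0 by simp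
next
  case (Suc k)
  hence kr: "k < rk I E" by simp
  have "M_seq E (map (V_k E I) [0..<Suc k]) = erect E (M_seq E (map (V_k E I) [0..<k])) (V_k E I k)"
    unfolding M_seq_def by simp
  also have "\<dots> = erect E (T k) (V_k E I k)" using Suc kr by simp
  also have "\<dots> = T (Suc k)" by (rule erect_step[OF kr])
  finally show ?case .
qed

end

theorem lemma5p7:
  fixes E :: "'a::linorder set" and I :: "'a set set" and r :: nat
  assumes "matroid E I"
    and "rk I E = r"
  shows "I = M_seq E (map (V_k E I) [0..<r])"
proof -
  interpret mat E I by (unfold_locales) (rule assms(1))
  show ?thesis using mseq[of r] Tr assms(2) by simp
qed


end
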